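(* Let $M$ be a matroid on a finite set $E$ and let $P=\{K_1,K_2,\dots,K_t\}$ (with the $K_i$ distinct) be a partition of $\cup\mathcal{B}(M)$. Then $|B\cap K_i|=1$ for every $B\in\mathcal{B}(M)$ and every $i\in\{1,\dots,t\}$ if and only if $\mathcal{B}(M)=\{\{b_1,b_2,\dots,b_t\}: b_i\in K_i,\ 1\le i\le t\}$.
   Context: $\mathcal{B}(M)$ denotes the family of bases of $M$ and $\cup\mathcal{B}(M)$ the union of all bases. A partition of a set $U$ is a family of nonempty pairwise disjoint subsets of $U$ whose union is $U$. *)

theory Defs
  imports Main
begin

definition matroid :: "'a set \<Rightarrow> 'a set set \<Rightarrow> bool" where
  "matroid E \<I> \<longleftrightarrow> finite E \<and> (\<forall>X\<in>\<I>. X \<subseteq> E) \<and> {} \<in> \<I> \<and>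
     (\<forall>X Y. X \<in> \<I> \<longrightarrow> Y \<subseteq> X \<longrightarrow> Y \<in> \<I>) \<and>
     (\<forall>X Y. X \<in> \<I> \<longrightarrow> Y \<in> \<I> \<longrightarrow> card X < card Y \<longrightarrow> (\<exists>y\<in>Y - X. insert y X \<in> \<I>))"

definition bases :: "'a set set \<Rightarrow> 'a set set" where
  "bases \<I> = {B. B \<in> \<I> \<and> (\<forall>X\<in>\<I>. B \<subseteq> X \<longrightarrow> X = B)}"

end

theory Submission
  imports Defs
begin

lemma extend_base:
  assumes m: "matroid E I" and X: "X \<in> I"
  shows "\<exists>B\<in>bases I. X \<subseteq> B"
proof -
  have fE: "finite E" and sub: "\<forall>Y\<in>I. Y \<subseteq> E" using m unfolding matroid_def by auto
  let ?S = "{Y\<in>I. X \<subseteq> Y}"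
  have fS: "finite ?S" using sub fE by (metis (no_types, lifting) Pow_iff finite_Pow_iff mem_Collect_eq rev_finite_subset subsetI)
  have ne: "?S \<noteq> {}" using X by auto
  obtain Y where Y: "Y \<in> ?S" and mx: "\<forall>Z\<in>?S. card Z \<le> card Y"
  proof -
    have "Max (card ` ?S) \<in> card ` ?S" using fS ne by simp
    then obtain Y where "Y \<in> ?S" "card Y = Max (card ` ?S)" by auto
    moreover have "\<forall>Z\<in>?S. card Z \<le> Max (card ` ?S)" using fS by simp
    ultimately show ?thesis using that by metis
  qed
  have "Y \<in> bases I"
    unfolding bases_def
  proof (intro CollectI conjI ballI impI)
    show "Y \<in> I" using Y by simp
    fix Z assume Z: "Z \<in> I" "Y \<subseteq> Z"
    then have "Z \<in> ?S" using Y by auto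
    then have "card Z \<le> card Y" using mx by auto
    moreover have "finite Z" using Z sub fE finite_subset by blast
    ultimately show "Z = Y" using Z card_seteq by blast
  qed
  then show ?thesis using Y by blast
qed

theorem theorem9:
  fixes E :: "'a set" and \<I> :: "'a set set" and K :: "nat \<Rightarrow> 'a set" and t :: nat
  assumes "matroid E \<I>"
    and "inj_on K {1..t}"
    and "\<forall>i\<in>{1..t}. K i \<noteq> {}"
    and "\<forall>i\<in>{1..t}. \<forall>j\<in>{1..t}. i \<noteq> j \<longrightarrow> K i \<inter> K j = {}"
    and "(\<Union>i\<in>{1..t}. K i) = \<Union>(bases \<I>)"
  shows "(\<forall>B\<in>bases \<I>. \<forall>i\<in>{1..t}. card (B \<inter> K i) = 1) \<longleftrightarrow>
         bases \<I> = {b ` {1..t} | b. \<forall>i\<in>{1..t}. b i \<in> K i}"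
proof
  have m: "matroid E \<I>" by fact
  have fE: "finite E" and sub: "\<forall>Y\<in>\<I>. Y \<subseteq> E" and down: "\<forall>X Y. X \<in> \<I> \<longrightarrow> Y \<subseteq> X \<longrightarrow> Y \<in> \<I>"
    and aug: "\<forall>X Y. X \<in> \<I> \<longrightarrow> Y \<in> \<I> \<longrightarrow> card X < card Y \<longrightarrow> (\<exists>y\<in>Y - X. insert y X \<in> \<I>)"
    using m unfolding matroid_def by auto
  have disj: "\<And>i j. i \<in> {1..t} \<Longrightarrow> j \<in> {1..t} \<Longrightarrow> i \<noteq> j \<Longrightarrow> K i \<inter> K j = {}" using assms(4) by blast
  have bI: "\<And>B. B \<in> bases \<I> \<Longrightarrow> B \<in> \<I>" unfolding bases_def by auto
  have fin: "\<And>X. X \<in> \<I> \<Longrightarrow> finite X" using sub fE finite_subset by blast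
  have unK: "\<And>z B. B \<in> bases \<I> \<Longrightarrow> z \<in> B \<Longrightarrow> \<exists>j\<in>{1..t}. z \<in> K j" using assms(5) by blast
  {
    assume P: "\<forall>B\<in>bases \<I>. \<forall>i\<in>{1..t}. card (B \<inter> K i) = 1"
    have cardB: "card B = t" if B: "B \<in> bases \<I>" for B
    proof -
      have "B = (\<Union>i\<in>{1..t}. B \<inter> K i)" using unK[OF B] by blast
      moreover have "card (\<Union>i\<in>{1..t}. B \<inter> K i) = (\<Sum>i\<in>{1..t}. card (B \<inter> K i))"
        by (rule card_UN_disjoint) (use fin[OF bI[OF B]] disj in blast)+
      ultimately show ?thesis using P B by simp
    qed
    have isbase: "X \<in> bases \<I>" if X: "X \<in> \<I>" "card X = t" for X
    proof -
      obtain B where B: "B \<in> bases \<I>" "X \<subseteq> B" using extend_base[OF m X(1)] by blast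
      have "X = B" using card_seteq[OF fin[OF bI[OF B(1)]] B(2)] cardB[OF B(1)] X(2) by simp
      then show ?thesis using B(1) by simp
    qed
    have one: "\<And>B i u v. B \<in> bases \<I> \<Longrightarrow> i \<in> {1..t} \<Longrightarrow> u \<in> B \<Longrightarrow> u \<in> K i \<Longrightarrow> v \<in> B \<Longrightarrow> v \<in> K i \<Longrightarrow> u = v"
    proof -
      fix B i u v assume h: "B \<in> bases \<I>" "i \<in> {1..t}" "u \<in> B" "u \<in> K i" "v \<in> B" "v \<in> K i"
      then have "card (B \<inter> K i) = 1" using P by blast
      then obtain w where "B \<inter> K i = {w}" using card_1_singletonE by blast
      then have "u \<in> {w}" "v \<in> {w}" using h by blast+
      then show "u = v" by simp
    qed
    have exch: "insert y (B - {x}) \<in> bases \<I>"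
      if B: "B \<in> bases \<I>" and i: "i \<in> {1..t}" and x: "x \<in> B" "x \<in> K i" and y: "y \<in> K i" for B i x y
    proof -
      obtain B2 where B2: "B2 \<in> bases \<I>" "y \<in> B2" using y i assms(5) by blast
      have I1: "B - {x} \<in> \<I>" using down bI[OF B] by blast
      have c1: "card (B - {x}) = t - 1" using cardB[OF B] x by simp
      have tpos: "t > 0" using i by auto
      obtain z where z: "z \<in> B2 - (B - {x})" "insert z (B - {x}) \<in> \<I>"
      proof -
        have "card (B - {x}) < card B2" using c1 cardB[OF B2(1)] tpos by simp
        then show ?thesis using aug I1 bI[OF B2(1)] that by blast
      qed
      have "z \<notin> B - {x}" using z(1) by blast
      then have cz: "card (insert z (B - {x})) = t" using c1 fin[OF I1] tpos by simp
      have NB: "insert z (B - {x}) \<in> bases \<I>" using isbase z cz by blast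
      obtain j where j: "j \<in> {1..t}" "z \<in> K j" using unK[OF B2(1)] z by blast
      have "j = i"
      proof (rule ccontr)
        assume ji: "j \<noteq> i"
        have "card (B \<inter> K j) = 1" using P B j by blast
        then obtain w where w: "B \<inter> K j = {w}" using card_1_singletonE by blast
        have wx: "w \<noteq> x" using w x disj[OF i j(1)] ji by blast
        have "w \<in> insert z (B - {x})" using w wx by blast
        then have "z = w" using one[OF NB j(1)] j w by blast
        then show False using z wx w by blast
      qed
      then have "z \<in> K i" using j by simp
      then have "z = y" using one[OF B2(1) i _ _ B2(2) y] z(1) by blast
      then show ?thesis using NB by simp
    qed
    have "bases \<I> = {b ` {1..t} | b. \<forall>i\<in>{1..t}. b i \<in> K i}"
    proof
      show "bases \<I> \<subseteq> {b ` {1..t} | b. \<forall>i\<in>{1..t}. b i \<in> K i}"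
      proof
        fix B assume B: "B \<in> bases \<I>"
        define b where "b = (\<lambda>i. THE u. u \<in> B \<inter> K i)"
        have bi: "b i \<in> B \<inter> K i" if i: "i \<in> {1..t}" for i
        proof -
          have "card (B \<inter> K i) = 1" using P B i by blast
          then obtain w where "B \<inter> K i = {w}" by (rule card_1_singletonE)
          then show ?thesis unfolding b_def by simp
        qed
        have "B = b ` {1..t}"
        proof
          show "b ` {1..t} \<subseteq> B" using bi by blast
          show "B \<subseteq> b ` {1..t}"
          proof
            fix z assume z: "z \<in> B"
            then obtain j where j: "j \<in> {1..t}" "z \<in> K j" using unK[OF B] by blast
            then have "z = b j" using one[OF B j(1) z j(2)] bi by blast
            then show "z \<in> b ` {1..t}" using j by blast
          qed
        qed
        then show "B \<in> {b ` {1..t} | b. \<forall>i\<in>{1..t}. b i \<in> K i}" using bi by blast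
      qed
    next
      show "{b ` {1..t} | b. \<forall>i\<in>{1..t}. b i \<in> K i} \<subseteq> bases \<I>"
      proof
        fix T assume "T \<in> {b ` {1..t} | b. \<forall>i\<in>{1..t}. b i \<in> K i}"
        then obtain b where T: "T = b ` {1..t}" and b: "\<forall>i\<in>{1..t}. b i \<in> K i" by blast
        have main: "\<And>B. B \<in> bases \<I> \<Longrightarrow> card {i\<in>{1..t}. b i \<notin> B} = n \<Longrightarrow> T \<in> bases \<I>" for n
        proof (induction n)
          case 0
          then have "\<forall>i\<in>{1..t}. b i \<in> B" by simp
          then have "T \<subseteq> B" using T by blast
          moreover have "inj_on b {1..t}"
          proof (rule inj_onI, rule ccontr)
            fix p q assume pq: "p \<in> {1..t}" "q \<in> {1..t}" "b p = b q" "p \<noteq> q"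
            have "b p \<in> K p" "b q \<in> K q" using b pq(1,2) by blast+
            then have "b p \<in> K p \<inter> K q" using pq(3) by simp
            then show False using disj[OF pq(1,2,4)] by simp
          qed
          then have "card T = t" using T by (simp add: card_image)
          ultimately have "T = B" using card_seteq[OF fin[OF bI[OF 0(1)]]] cardB[OF 0(1)] by simp
          then show ?case using 0(1) by simp
        next
          case (Suc n)
          have "{i\<in>{1..t}. b i \<notin> B} \<noteq> {}" using Suc.prems(2) by (metis card.empty nat.distinct(1))
          then obtain i where i: "i \<in> {1..t}" "b i \<notin> B" by blast
          have "card (B \<inter> K i) = 1" using P Suc.prems(1) i(1) by blast
          then obtain x where x: "B \<inter> K i = {x}" by (rule card_1_singletonE)
          let ?B = "insert (b i) (B - {x})"
          have xB: "x \<in> B" "x \<in> K i" using x by blast+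
          have biK: "b i \<in> K i" using b i(1) by blast
          have NB: "?B \<in> bases \<I>" by (rule exch[OF Suc.prems(1) i(1) xB biK])
          have eq: "{j\<in>{1..t}. b j \<notin> ?B} = {j\<in>{1..t}. b j \<notin> B} - {i}"
          proof -
            have ne: "b j \<noteq> x \<and> b j \<noteq> b i" if jj: "j \<in> {1..t}" "j \<noteq> i" for j
            proof -
              have h1: "b j \<in> K j" using b jj(1) by blast
              have h2: "K i \<inter> K j = {}" using disj[OF i(1) jj(1)] jj(2) by argo
              have "b j \<noteq> x" using h1 h2 xB(2) by (metis IntI empty_iff)
              moreover have "b j \<noteq> b i" using h1 h2 biK by (metis IntI empty_iff)
              ultimately show ?thesis by (rule conjI)
            qed
            show ?thesis
            proof (rule set_eqI, rule iffI)
              fix j assume jj: "j \<in> {j\<in>{1..t}. b j \<notin> ?B}"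
              then have j1: "j \<in> {1..t}" and j2: "b j \<notin> ?B" by auto
              from j2 have "b j \<noteq> b i" by blast
              then have "j \<noteq> i" by blast
              moreover have "b j \<notin> B" using ne[OF j1 \<open>j \<noteq> i\<close>] j2 by blast
              ultimately show "j \<in> {j\<in>{1..t}. b j \<notin> B} - {i}" using j1 by blast
            next
              fix j assume j: "j \<in> {j\<in>{1..t}. b j \<notin> B} - {i}"
              then have j1: "j \<in> {1..t}" and j2: "j \<noteq> i" and j3: "b j \<notin> B" by auto
              have "b j \<noteq> b i" using ne[OF j1 j2] by blast
              then have "b j \<notin> ?B" using j3 by blast
              then show "j \<in> {j\<in>{1..t}. b j \<notin> ?B}" using j1 by blast
            qed
          qed
          have fS: "finite {j\<in>{1..t}. b j \<notin> B}" by simp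
          have iS: "i \<in> {j\<in>{1..t}. b j \<notin> B}" using i by blast
          have "card ({j\<in>{1..t}. b j \<notin> B} - {i}) = n"
            using card_Diff_singleton[OF iS] Suc.prems(2) by linarith
          then have "card {j\<in>{1..t}. b j \<notin> ?B} = n" unfolding eq .
          then show ?case by (rule Suc.IH[OF NB])
        qed
        have e: "{} \<in> \<I>" using m unfolding matroid_def by (elim conjE)
        obtain B0 where "B0 \<in> bases \<I>" using extend_base[OF m e] by blast
        then show "T \<in> bases \<I>" using main by blast
      qed
    qed
  }
  then show "(\<forall>B\<in>bases \<I>. \<forall>i\<in>{1..t}. card (B \<inter> K i) = 1) \<Longrightarrow> bases \<I> = {b ` {1..t} | b. \<forall>i\<in>{1..t}. b i \<in> K i}" .
next
  have disj: "\<And>i j. i \<in> {1..t} \<Longrightarrow> j \<in> {1..t} \<Longrightarrow> i \<noteq> j \<Longrightarrow> K i \<inter> K j = {}" using assms(4) by blast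
  assume H: "bases \<I> = {b ` {1..t} | b. \<forall>i\<in>{1..t}. b i \<in> K i}"
  show "\<forall>B\<in>bases \<I>. \<forall>i\<in>{1..t}. card (B \<inter> K i) = 1"
  proof (intro ballI)
    fix B i assume B: "B \<in> bases \<I>" and i: "i \<in> {1..t}"
    have "B \<in> {b ` {1..t} | b. \<forall>i\<in>{1..t}. b i \<in> K i}" using B H by simp
    then obtain b where T: "B = b ` {1..t}" and b: "\<forall>i\<in>{1..t}. b i \<in> K i" by blast
    have "B \<inter> K i = {b i}"
    proof
      show "{b i} \<subseteq> B \<inter> K i" using T b i by blast
      show "B \<inter> K i \<subseteq> {b i}"
      proof
        fix z assume z: "z \<in> B \<inter> K i"
        then obtain j where j: "j \<in> {1..t}" "z = b j" using T by blast
        have "j = i"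
        proof (rule ccontr)
          assume "j \<noteq> i"
          then have "K i \<inter> K j = {}" using disj[OF i j(1)] by argo
          moreover have "z \<in> K j" using b j by blast
          ultimately show False using z by blast
        qed
        then show "z \<in> {b i}" using j by simp
      qed
    qed
    then show "card (B \<inter> K i) = 1" by simp
  qed
qed

end
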